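(* Let $(X,d)$ be a quasi-tree with bottleneck constant $\Delta\geqslant0$ which is $\delta$-hyperbolic, and let $x_0\in X$. Then the end-approximating map $f:X\to T_X$, $f(x)=[x]$, is a $(1,2(\Delta+2\delta))$-quasi-isometry; more precisely, it is surjective and $d(x,y)-2(\Delta+2\delta)\leqslant d^*([x],[y])\leqslant d(x,y)$ for all $x,y\in X$.
   Context: A quasi-tree is a geodesic metric space quasi-isometric to a simplicial tree. $X$ is $\delta$-hyperbolic if every geodesic triangle is $\delta$-slim (each point of a side is within $\delta$ of the union of the other two sides). A bottleneck constant is $\Delta\geqslant0$ such that for every geodesic $[x,y]$ and every $z\in[x,y]$, every path from $x$ to $y$ meets the closed ball $B(z,\Delta)$. End-approximating tree: with $(x,y)_{x_0}=\frac12(d(x_0,x)+d(x_0,y)-d(x,y))$, set $(x,y)'_{x_0}=\sup\min_{1\leqslant i\leqslant n-1}(x_i,x_{i+1})_{x_0}$ over all finite sequences $x=x_1,\ldots,x_n=y$ in $X$, and $d'(x,y)=d(x_0,x)+d(x_0,y)-2(x,y)'_{x_0}$; $T_X=X/\sim$ with $x\sim y$ iff $d'(x,y)=0$, metric $d^*([x],[y])=d'(x,y)$. A $(1,C)$-quasi-isometry $g$ satisfies $d(a,b)-C\leqslant d(g(a),g(b))\leqslant d(a,b)+C$ and has $C$-dense image. *)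

theory Defs
  imports "HOL-Analysis.Analysis"
begin

definition geodesic_seg :: "'a::metric_space set \<Rightarrow> 'a \<Rightarrow> 'a \<Rightarrow> 'a set \<Rightarrow> bool" where
  "geodesic_seg X x y S \<longleftrightarrow>
     (\<exists>\<gamma>::real \<Rightarrow> 'a. \<gamma> 0 = x \<and> \<gamma> (dist x y) = y \<and>
        (\<forall>s\<in>{0..dist x y}. \<forall>t\<in>{0..dist x y}. dist (\<gamma> s) (\<gamma> t) = \<bar>s - t\<bar>) \<and>
        \<gamma> ` {0..dist x y} = S \<and> S \<subseteq> X)"

definition geodesic_space :: "'a::metric_space set \<Rightarrow> bool" where
  "geodesic_space X \<longleftrightarrow> (\<forall>x\<in>X. \<forall>y\<in>X. \<exists>S. geodesic_seg X x y S)"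

definition hyperbolic :: "'a::metric_space set \<Rightarrow> real \<Rightarrow> bool" where
  "hyperbolic X \<delta> \<longleftrightarrow>
     (\<forall>x y z A B C. geodesic_seg X x y A \<and> geodesic_seg X y z B \<and> geodesic_seg X z x C \<longrightarrow>
        (\<forall>p\<in>A. infdist p (B \<union> C) \<le> \<delta>))"

definition bottleneck :: "'a::metric_space set \<Rightarrow> real \<Rightarrow> bool" where
  "bottleneck X \<Delta> \<longleftrightarrow> \<Delta> \<ge> 0 \<and>
     (\<forall>x y S z g. geodesic_seg X x y S \<and> z \<in> S \<and> path g \<and> path_image g \<subseteq> X \<and>
        pathstart g = x \<and> pathfinish g = y \<longrightarrow> path_image g \<inter> cball z \<Delta> \<noteq> {})"

definition is_walk :: "('v \<Rightarrow> 'v \<Rightarrow> bool) \<Rightarrow> 'v list \<Rightarrow> bool" where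
  "is_walk E xs \<longleftrightarrow> xs \<noteq> [] \<and> (\<forall>i. Suc i < length xs \<longrightarrow> E (xs ! i) (xs ! Suc i))"

definition simplicial_tree :: "'v set \<Rightarrow> ('v \<Rightarrow> 'v \<Rightarrow> bool) \<Rightarrow> bool" where
  "simplicial_tree V E \<longleftrightarrow> V \<noteq> {} \<and>
     (\<forall>u v. E u v \<longrightarrow> u \<in> V \<and> v \<in> V \<and> E v u \<and> u \<noteq> v) \<and>
     (\<forall>u\<in>V. \<forall>v\<in>V. \<exists>xs. is_walk E xs \<and> hd xs = u \<and> last xs = v) \<and>
     \<not> (\<exists>xs. is_walk E xs \<and> length xs \<ge> 3 \<and> distinct xs \<and> E (last xs) (hd xs))"

definition tree_dist :: "('v \<Rightarrow> 'v \<Rightarrow> bool) \<Rightarrow> 'v \<Rightarrow> 'v \<Rightarrow> nat" where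
  "tree_dist E u v = (LEAST n. \<exists>xs. is_walk E xs \<and> hd xs = u \<and> last xs = v \<and> length xs = Suc n)"

text \<open>X is quasi-isometric to a simplicial tree (equivalently, to its vertex set
  with the path metric, which is 1/2-dense in the geometric realisation).\<close>
definition quasi_tree :: "'a::metric_space set \<Rightarrow> bool" where
  "quasi_tree X \<longleftrightarrow>
     (\<exists>(V::('a \<times> nat) set) E (q::'a \<Rightarrow> 'a \<times> nat) (L::real) (C::real). simplicial_tree V E \<and> L \<ge> 1 \<and> C \<ge> 0 \<and>
        q ` X \<subseteq> V \<and>
        (\<forall>x\<in>X. \<forall>y\<in>X. dist x y / L - C \<le> real (tree_dist E (q x) (q y)) \<and>
                         real (tree_dist E (q x) (q y)) \<le> L * dist x y + C) \<and>
        (\<forall>v\<in>V. \<exists>x\<in>X. real (tree_dist E (q x) v) \<le> C))"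

definition gromov :: "'a::metric_space \<Rightarrow> 'a \<Rightarrow> 'a \<Rightarrow> real" where
  "gromov x0 x y = (dist x0 x + dist x0 y - dist x y) / 2"

definition chain_gromov :: "'a::metric_space set \<Rightarrow> 'a \<Rightarrow> 'a \<Rightarrow> 'a \<Rightarrow> real" where
  "chain_gromov X x0 x y =
     Sup {Min {gromov x0 (xs ! i) (xs ! Suc i) | i. Suc i < length xs} | xs.
            length xs \<ge> 2 \<and> set xs \<subseteq> X \<and> hd xs = x \<and> last xs = y}"

definition dprime :: "'a::metric_space set \<Rightarrow> 'a \<Rightarrow> 'a \<Rightarrow> 'a \<Rightarrow> real" where
  "dprime X x0 x y = dist x0 x + dist x0 y - 2 * chain_gromov X x0 x y"

definition end_rel :: "'a::metric_space set \<Rightarrow> 'a \<Rightarrow> ('a \<times> 'a) set" where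
  "end_rel X x0 = {(x, y). x \<in> X \<and> y \<in> X \<and> dprime X x0 x y = 0}"

definition TX :: "'a::metric_space set \<Rightarrow> 'a \<Rightarrow> 'a set set" where
  "TX X x0 = X // end_rel X x0"

definition end_map :: "'a::metric_space set \<Rightarrow> 'a \<Rightarrow> 'a \<Rightarrow> 'a set" where
  "end_map X x0 x = end_rel X x0 `` {x}"

definition dstar :: "'a::metric_space set \<Rightarrow> 'a \<Rightarrow> 'a set \<Rightarrow> 'a set \<Rightarrow> real" where
  "dstar X x0 A B = dprime X x0 (SOME x. x \<in> A) (SOME y. y \<in> B)"

end

theory Submission
  imports Defs
begin

lemma isom_cont:
  fixes \<gamma> :: "real \<Rightarrow> 'a::metric_space"
  assumes "\<forall>s\<in>{0..D}. \<forall>t\<in>{0..D}. dist (\<gamma> s) (\<gamma> t) = \<bar>s - t\<bar>"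
  shows "continuous_on {0..D} \<gamma>"
  unfolding continuous_on_iff
proof (intro ballI allI impI)
  fix x e assume x: "x \<in> {0..D}" and e: "(0::real) < e"
  show "\<exists>d>0. \<forall>x'\<in>{0..D}. dist x' x < d \<longrightarrow> dist (\<gamma> x') (\<gamma> x) < e"
    using assms x e by (intro exI[of _ e]) (auto simp: dist_real_def)
qed

lemma seg_split:
  assumes "geodesic_seg X u v S" "a \<in> S"
  shows "dist u a + dist a v = dist u v"
proof -
  obtain \<gamma> where g: "\<gamma> 0 = u" "\<gamma> (dist u v) = v"
    "\<forall>s\<in>{0..dist u v}. \<forall>t\<in>{0..dist u v}. dist (\<gamma> s) (\<gamma> t) = \<bar>s - t\<bar>"
    "\<gamma> ` {0..dist u v} = S" using assms(1) unfolding geodesic_seg_def by blast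
  then obtain s where s: "s \<in> {0..dist u v}" "a = \<gamma> s" using assms(2) by blast
  have "dist u a = s" using g(1,3) s by (metis atLeastAtMost_iff abs_of_nonneg diff_zero dist_commute order_refl zero_le_dist)
  moreover have "dist a v = dist u v - s" using g(2,3) s
    by (metis abs_minus_commute abs_of_nonneg atLeastAtMost_iff diff_ge_0_iff_ge order_refl zero_le_dist)
  ultimately show ?thesis by simp
qed

lemma seg_props:
  assumes "geodesic_seg X u v S"
  shows "compact S" "u \<in> S" "v \<in> S" "S \<subseteq> X"
    "\<exists>g. path g \<and> path_image g = S \<and> pathstart g = u \<and> pathfinish g = v"
proof -
  obtain \<gamma> where g: "\<gamma> 0 = u" "\<gamma> (dist u v) = v"
    "\<forall>s\<in>{0..dist u v}. \<forall>t\<in>{0..dist u v}. dist (\<gamma> s) (\<gamma> t) = \<bar>s - t\<bar>"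
    "\<gamma> ` {0..dist u v} = S" "S \<subseteq> X" using assms(1) unfolding geodesic_seg_def by blast
  have c: "continuous_on {0..dist u v} \<gamma>" by (rule isom_cont[OF g(3)])
  show "compact S" using compact_continuous_image[OF c] g(4) by simp
  show "u \<in> S" using g(1,4) by force
  show "v \<in> S" using g(2,4) by (metis atLeastAtMost_iff image_eqI order_refl zero_le_dist)
  show "S \<subseteq> X" by fact
  define D where "D = dist u v"
  have im: "(\<lambda>t. D * t) ` {0..1} = {0..D}"
    using image_mult_atLeastAtMost_if[of D 0 1] by (cases "D = 0") (auto simp: D_def)
  have "path (\<lambda>t. \<gamma> (D * t))" unfolding path_def
    by (rule continuous_on_compose2[OF c]) (auto intro!: continuous_intros mult_left_le simp: D_def)
  moreover have "path_image (\<lambda>t. \<gamma> (D * t)) = S" unfolding path_image_def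
    using im g(4) by (metis D_def image_image)
  ultimately show "\<exists>g. path g \<and> path_image g = S \<and> pathstart g = u \<and> pathfinish g = v"
    using g(1,2) by (intro exI[of _ "\<lambda>t. \<gamma> (D * t)"]) (auto simp: pathstart_def pathfinish_def D_def)
qed

lemma tri:
  assumes S: "geodesic_seg X x y S" and B: "geodesic_seg X y x0 B" and C: "geodesic_seg X x0 x C"
    and sl: "\<forall>p\<in>S. infdist p (B \<union> C) \<le> \<delta>"
  shows "\<exists>p\<in>S. dist x0 p \<le> gromov x0 x y + 2 * \<delta>"
proof -
  obtain \<gamma> where g: "\<gamma> 0 = x" "\<gamma> (dist x y) = y"
    "\<forall>s\<in>{0..dist x y}. \<forall>t\<in>{0..dist x y}. dist (\<gamma> s) (\<gamma> t) = \<bar>s - t\<bar>"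
    "\<gamma> ` {0..dist x y} = S" using S unfolding geodesic_seg_def by blast
  have c: "continuous_on {0..dist x y} \<gamma>" by (rule isom_cont[OF g(3)])
  have Bp: "compact B" "y \<in> B" "x0 \<in> B" using seg_props[OF B] by auto
  have Cp: "compact C" "x0 \<in> C" "x \<in> C" using seg_props[OF C] by auto
  define h where "h t = infdist (\<gamma> t) C - infdist (\<gamma> t) B" for t
  have hc: "continuous_on {0..dist x y} h" unfolding h_def
    by (intro continuous_intros c)
  have "h 0 \<le> 0" using g(1) Cp by (simp add: h_def infdist_nonneg)
  moreover have "0 \<le> h (dist x y)" using g(2) Bp by (simp add: h_def infdist_nonneg)
  ultimately obtain t where t: "0 \<le> t" "t \<le> dist x y" "h t = 0"
    using IVT'[of h 0 0 "dist x y", OF _ _ _ hc] by auto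
  define p where "p = \<gamma> t"
  have pS: "p \<in> S" using g(4) t by (auto simp: p_def)
  have "infdist p (B \<union> C) \<le> \<delta>" using sl pS by auto
  moreover have "infdist p (B \<union> C) = min (infdist p B) (infdist p C)"
    by (rule infdist_Un_min) (use Bp(2) Cp(2) in auto)
  ultimately have "min (infdist p B) (infdist p C) \<le> \<delta>" by simp
  hence iB: "infdist p B \<le> \<delta>" and iC: "infdist p C \<le> \<delta>" using t(3) by (auto simp: h_def p_def)
  obtain b where b: "b \<in> B" "\<forall>z\<in>B. dist p b \<le> dist p z"
    using continuous_attains_inf[OF Bp(1), of "\<lambda>z. dist p z"] Bp(2)
      continuous_on_dist[OF continuous_on_const continuous_on_id, of B p] by auto
  have "infdist p B = dist p b" using b
    by (metis antisym cINF_greatest empty_iff infdist_le infdist_notempty)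
  hence db: "dist p b \<le> \<delta>" using iB by simp
  obtain a where a: "a \<in> C" "\<forall>z\<in>C. dist p a \<le> dist p z"
    using continuous_attains_inf[OF Cp(1), of "\<lambda>z. dist p z"] Cp(2)
      continuous_on_dist[OF continuous_on_const continuous_on_id, of C p] by auto
  have "infdist p C = dist p a" using a
    by (metis antisym cINF_greatest empty_iff infdist_le infdist_notempty)
  hence da: "dist p a \<le> \<delta>" using iC by simp
  have e1: "dist x p + dist p y = dist x y" using seg_split[OF S pS] .
  have e2: "dist y b + dist b x0 = dist y x0" using seg_split[OF B b(1)] .
  have e3: "dist x0 a + dist a x = dist x0 x" using seg_split[OF C a(1)] .
  have "dist x p \<le> dist x a + dist a p" "dist y p \<le> dist y b + dist b p"
    "dist x0 p \<le> dist x0 a + dist a p" "dist x0 p \<le> dist x0 b + dist b p"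
    by (rule dist_triangle)+
  hence "dist x0 p \<le> gromov x0 x y + 2 * \<delta>"
    using e1 e2 e3 da db unfolding gromov_def by (simp add: dist_commute field_simps)
  thus ?thesis using pS by blast
qed

definition cmin :: "'a::metric_space \<Rightarrow> 'a list \<Rightarrow> real" where
  "cmin x0 xs = Min {gromov x0 (xs ! i) (xs ! Suc i) | i. Suc i < length xs}"

lemma cmin_set: "{gromov x0 (xs ! i) (xs ! Suc i) | i. Suc i < length xs}
   = (\<lambda>i. gromov x0 (xs ! i) (xs ! Suc i)) ` {i. Suc i < length xs}" by auto

lemma fin_idx: "finite {i. Suc i < length xs}"
  by (rule finite_subset[of _ "{..<length xs}"]) auto

lemma cmin_le: "Suc i < length xs \<Longrightarrow> cmin x0 xs \<le> gromov x0 (xs ! i) (xs ! Suc i)"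
  unfolding cmin_def cmin_set by (rule Min_le) (auto simp: fin_idx)

lemma cmin_ge: "2 \<le> length xs \<Longrightarrow> (\<And>i. Suc i < length xs \<Longrightarrow> m \<le> gromov x0 (xs ! i) (xs ! Suc i))
   \<Longrightarrow> m \<le> cmin x0 xs"
  unfolding cmin_def cmin_set by (subst Min_ge_iff) (auto simp: fin_idx intro: exI[of _ 0])

lemma chain_path:
  assumes "geodesic_space X"
  shows "2 \<le> length xs \<Longrightarrow> set xs \<subseteq> X \<Longrightarrow> \<exists>g. path g \<and> path_image g \<subseteq> X \<and>
     pathstart g = hd xs \<and> pathfinish g = last xs \<and>
     (\<forall>p\<in>path_image g. \<exists>i. Suc i < length xs \<and> gromov x0 (xs ! i) (xs ! Suc i) \<le> dist x0 p)"
proof (induction xs rule: induct_list012)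
  case (3 a b rest)
  obtain S where S: "geodesic_seg X a b S" using assms 3(4) unfolding geodesic_space_def by (meson list.set_intros subsetD)
  obtain g1 where g1: "path g1" "path_image g1 = S" "pathstart g1 = a" "pathfinish g1 = b"
    using seg_props(5)[OF S] by blast
  have SX: "S \<subseteq> X" using seg_props[OF S] by auto
  have g1b: "gromov x0 a b \<le> dist x0 p" if "p \<in> S" for p
  proof -
    have "dist a p + dist p b = dist a b" using seg_split[OF S that] .
    moreover have "dist x0 a \<le> dist x0 p + dist p a" "dist x0 b \<le> dist x0 p + dist p b"
      by (rule dist_triangle)+
    ultimately show ?thesis unfolding gromov_def by (simp add: dist_commute)
  qed
  show ?case
  proof (cases rest)
    case Nil
    then show ?thesis using g1 SX g1b by (intro exI[of _ g1]) auto
  next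
    case (Cons c r)
    obtain g2 where g2: "path g2" "path_image g2 \<subseteq> X" "pathstart g2 = b" "pathfinish g2 = last (b # rest)"
      "\<forall>p\<in>path_image g2. \<exists>i. Suc i < length (b # rest) \<and> gromov x0 ((b # rest) ! i) ((b # rest) ! Suc i) \<le> dist x0 p"
      using 3(2) 3(4) Cons by auto
    have "\<forall>p\<in>path_image (g1 +++ g2). \<exists>i. Suc i < length (a # b # rest) \<and>
        gromov x0 ((a # b # rest) ! i) ((a # b # rest) ! Suc i) \<le> dist x0 p"
    proof
      fix p assume "p \<in> path_image (g1 +++ g2)"
      hence "p \<in> S \<or> p \<in> path_image g2" using path_image_join[of g1 g2] g1 g2 by auto
      thus "\<exists>i. Suc i < length (a # b # rest) \<and>
        gromov x0 ((a # b # rest) ! i) ((a # b # rest) ! Suc i) \<le> dist x0 p"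
      proof
        assume "p \<in> S" thus ?thesis using g1b by (intro exI[of _ 0]) auto
      next
        assume "p \<in> path_image g2"
        then obtain i where "Suc i < length (b # rest)"
          "gromov x0 ((b # rest) ! i) ((b # rest) ! Suc i) \<le> dist x0 p" using g2(5) by blast
        thus ?thesis by (intro exI[of _ "Suc i"]) auto
      qed
    qed
    moreover have "path (g1 +++ g2)" using g1 g2 by auto
    moreover have "path_image (g1 +++ g2) \<subseteq> X" using path_image_join[of g1 g2] g1 g2 SX by auto
    ultimately show ?thesis using g1 g2 Cons by (intro exI[of _ "g1 +++ g2"]) auto
  qed
qed auto

lemma ne2: "2 \<le> length xs \<Longrightarrow> xs \<noteq> []" by auto

lemma gromov_sym: "gromov x0 a b = gromov x0 b a"
  unfolding gromov_def by (simp add: dist_commute)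

lemma gromov_le1: "gromov x0 a b \<le> dist x0 a"
  using dist_triangle[of x0 b a] unfolding gromov_def by (simp add: dist_commute)

lemma gromov_le2: "gromov x0 a b \<le> dist x0 b"
  using gromov_le1[of x0 b a] gromov_sym[of x0 a b] by simp

lemma cmin_hd: "2 \<le> length xs \<Longrightarrow> cmin x0 xs \<le> dist x0 (hd xs)"
proof -
  assume a: "2 \<le> length xs"
  have "cmin x0 xs \<le> gromov x0 (xs ! 0) (xs ! Suc 0)" by (rule cmin_le) (use a in auto)
  moreover have "hd xs = xs ! 0" using ne2[OF a] by (simp add: hd_conv_nth)
  ultimately show ?thesis using gromov_le1 order_trans by metis
qed

lemma cmin_last: "2 \<le> length xs \<Longrightarrow> cmin x0 xs \<le> dist x0 (last xs)"
proof -
  assume a: "2 \<le> length xs"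
  have "cmin x0 xs \<le> gromov x0 (xs ! (length xs - 2)) (xs ! Suc (length xs - 2))"
    by (rule cmin_le) (use a in auto)
  also have "Suc (length xs - 2) = length xs - 1" using a by auto
  also have "xs ! (length xs - 1) = last xs" using ne2[OF a] last_conv_nth[of xs] by auto
  finally show ?thesis using gromov_le2 order_trans by blast
qed

lemma cmin_pair: "cmin x0 [a, b] = gromov x0 a b"
  using cmin_le[of 0 "[a,b]" x0] cmin_ge[of "[a,b]" "gromov x0 a b" x0] by auto

lemma cmin_rev_le: "2 \<le> length xs \<Longrightarrow> cmin x0 xs \<le> cmin x0 (rev xs)"
proof (rule cmin_ge)
  assume a: "2 \<le> length xs"
  show "2 \<le> length (rev xs)" using a by simp
  fix i assume i: "Suc i < length (rev xs)"
  define n where "n = length xs"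
  have "cmin x0 xs \<le> gromov x0 (xs ! (n - 2 - i)) (xs ! Suc (n - 2 - i))"
    by (rule cmin_le) (use i in \<open>auto simp: n_def\<close>)
  also have "Suc (n - 2 - i) = n - 1 - i" using i by (auto simp: n_def)
  also have "xs ! (n - 1 - i) = rev xs ! i" using i by (simp add: rev_nth n_def)
  also have "xs ! (n - 2 - i) = rev xs ! Suc i" using i by (simp add: rev_nth n_def)
  finally show "cmin x0 xs \<le> gromov x0 (rev xs ! i) (rev xs ! Suc i)" using gromov_sym by metis
qed

lemma cmin_rev: "2 \<le> length xs \<Longrightarrow> cmin x0 (rev xs) = cmin x0 xs"
  using cmin_rev_le[of xs x0] cmin_rev_le[of "rev xs" x0] by simp

lemma cmin_concat:
  assumes "2 \<le> length xs" "2 \<le> length ys" "last xs = hd ys"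
  shows "min (cmin x0 xs) (cmin x0 ys) \<le> cmin x0 (xs @ tl ys)"
proof (rule cmin_ge)
  show "2 \<le> length (xs @ tl ys)" using assms by simp
  define zs where "zs = xs @ tl ys"
  have shift: "zs ! k = ys ! (k + 1 - length xs)" if "length xs - 1 \<le> k" "k < length zs" for k
  proof (cases "k < length xs")
    case True
    hence "k = length xs - 1" using that by auto
    hence "zs ! k = last xs" using True assms ne2[OF assms(1)] last_conv_nth[of xs] by (auto simp: zs_def nth_append)
    also have "\<dots> = ys ! 0" using assms ne2[OF assms(2)] by (simp add: hd_conv_nth)
    finally show ?thesis using \<open>k = length xs - 1\<close> assms by simp
  next
    case False
    thus ?thesis using that assms by (simp add: zs_def nth_append nth_tl Suc_diff_le)
  qed
  fix i assume i: "Suc i < length (xs @ tl ys)"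
  show "min (cmin x0 xs) (cmin x0 ys) \<le> gromov x0 ((xs @ tl ys) ! i) ((xs @ tl ys) ! Suc i)"
  proof (cases "Suc i < length xs")
    case True
    thus ?thesis using cmin_le[OF True, of x0] by (simp add: nth_append)
  next
    case False
    have l: "zs ! i = ys ! (i + 1 - length xs)" "zs ! Suc i = ys ! Suc (i + 1 - length xs)"
      using shift[of i] shift[of "Suc i"] False i by (auto simp: zs_def Suc_diff_le)
    have "Suc (i + 1 - length xs) < length ys" using i False assms by auto
    from cmin_le[OF this, of x0] show ?thesis using l by (simp add: zs_def)
  qed
qed

lemma concat_props:
  assumes "2 \<le> length xs" "2 \<le> length ys" "last xs = hd ys"
  shows "2 \<le> length (xs @ tl ys)" "hd (xs @ tl ys) = hd xs" "last (xs @ tl ys) = last ys"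
    "set (xs @ tl ys) \<subseteq> set xs \<union> set ys"
  using assms by (cases xs; cases ys; auto simp: list.set_sel)+

definition chains :: "'a set \<Rightarrow> 'a \<Rightarrow> 'a \<Rightarrow> 'a list set" where
  "chains X x y = {xs. length xs \<ge> 2 \<and> set xs \<subseteq> X \<and> hd xs = x \<and> last xs = y}"

lemma cg_eq: "chain_gromov X x0 x y = Sup (cmin x0 ` chains X x y)"
  unfolding chain_gromov_def cmin_def chains_def by (rule arg_cong[where f=Sup]) auto

lemma pair_chain: "x \<in> X \<Longrightarrow> y \<in> X \<Longrightarrow> [x, y] \<in> chains X x y"
  by (auto simp: chains_def)

lemma chains_bdd: "bdd_above (cmin x0 ` chains X x y)"
  by (rule bdd_aboveI[of _ "dist x0 x"]) (auto simp: chains_def intro!: cmin_hd)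

lemma cg_lower:
  assumes a: "x \<in> X" "y \<in> X" shows "gromov x0 x y \<le> chain_gromov X x0 x y"
proof -
  have "cmin x0 [x, y] \<in> cmin x0 ` chains X x y" using pair_chain[OF a] by blast
  hence "cmin x0 [x, y] \<le> Sup (cmin x0 ` chains X x y)" by (rule cSup_upper[OF _ chains_bdd])
  thus ?thesis unfolding cg_eq by (simp add: cmin_pair)
qed

lemma cg_upper:
  assumes a: "x \<in> X" "y \<in> X"
  shows "chain_gromov X x0 x y \<le> dist x0 x \<and> chain_gromov X x0 x y \<le> dist x0 y"
proof -
  have ne: "cmin x0 ` chains X x y \<noteq> {}" using pair_chain[OF a] by blast
  have "Sup (cmin x0 ` chains X x y) \<le> dist x0 x"
    by (rule cSup_least[OF ne]) (auto simp: chains_def cmin_hd)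
  moreover have "Sup (cmin x0 ` chains X x y) \<le> dist x0 y"
    by (rule cSup_least[OF ne]) (auto simp: chains_def cmin_last)
  ultimately show ?thesis unfolding cg_eq by simp
qed

lemma cg_sym_le:
  assumes a: "x \<in> X" "y \<in> X"
  shows "chain_gromov X x0 x y \<le> chain_gromov X x0 y x"
  unfolding cg_eq
proof (rule cSup_least)
  show "cmin x0 ` chains X x y \<noteq> {}" using pair_chain[OF a] by blast
next
  fix c assume "c \<in> cmin x0 ` chains X x y"
  then obtain xs where xs: "xs \<in> chains X x y" "c = cmin x0 xs" by blast
  hence "rev xs \<in> chains X y x" by (auto simp: chains_def hd_rev last_rev)
  moreover have "c = cmin x0 (rev xs)" using xs cmin_rev[of xs x0] by (simp add: chains_def)
  ultimately show "c \<le> Sup (cmin x0 ` chains X y x)" using cSup_upper[OF _ chains_bdd] by blast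
qed

lemma cg_sym: "x \<in> X \<Longrightarrow> y \<in> X \<Longrightarrow> chain_gromov X x0 x y = chain_gromov X x0 y x"
  using cg_sym_le[of x X y x0] cg_sym_le[of y X x x0] by simp

lemma cg_trans:
  assumes "x \<in> X" "y \<in> X" "z \<in> X"
  shows "min (chain_gromov X x0 x y) (chain_gromov X x0 y z) \<le> chain_gromov X x0 x z"
proof (rule field_le_epsilon)
  fix e :: real assume e: "0 < e"
  let ?m = "min (chain_gromov X x0 x y) (chain_gromov X x0 y z)"
  have "?m - e < Sup (cmin x0 ` chains X x y)" using e cg_eq[of X x0 x y] by simp
  then obtain xs where xs: "xs \<in> chains X x y" "?m - e < cmin x0 xs"
    using less_cSupD[of "cmin x0 ` chains X x y"] pair_chain[OF assms(1,2)] by blast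
  have "?m - e < Sup (cmin x0 ` chains X y z)" using e cg_eq[of X x0 y z] by simp
  then obtain ys where ys: "ys \<in> chains X y z" "?m - e < cmin x0 ys"
    using less_cSupD[of "cmin x0 ` chains X y z"] pair_chain[OF assms(2,3)] by blast
  have c: "2 \<le> length xs" "2 \<le> length ys" "last xs = hd ys" using xs ys by (auto simp: chains_def)
  have "xs @ tl ys \<in> chains X x z" using concat_props[OF c] xs ys by (auto simp: chains_def)
  hence "cmin x0 (xs @ tl ys) \<le> chain_gromov X x0 x z"
    unfolding cg_eq by (rule cSup_upper[OF imageI chains_bdd])
  moreover have "min (cmin x0 xs) (cmin x0 ys) \<le> cmin x0 (xs @ tl ys)" by (rule cmin_concat[OF c])
  ultimately show "?m \<le> chain_gromov X x0 x z + e" using xs ys by linarith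
qed

lemma cmin_key:
  assumes gs: "geodesic_space X" and bn: "bottleneck X \<Delta>" and hy: "hyperbolic X \<delta>"
    and x0: "x0 \<in> X" and xs: "xs \<in> chains X x y"
  shows "cmin x0 xs \<le> gromov x0 x y + \<Delta> + 2 * \<delta>"
proof -
  have l: "2 \<le> length xs" "set xs \<subseteq> X" "hd xs = x" "last xs = y" using xs by (auto simp: chains_def)
  have xX: "x \<in> X" "y \<in> X" using l ne2[OF l(1)] by auto
  obtain S where S: "geodesic_seg X x y S" using gs xX unfolding geodesic_space_def by blast
  obtain B where B: "geodesic_seg X y x0 B" using gs xX x0 unfolding geodesic_space_def by blast
  obtain C where C: "geodesic_seg X x0 x C" using gs xX x0 unfolding geodesic_space_def by blast
  have "\<forall>p\<in>S. infdist p (B \<union> C) \<le> \<delta>" using hy S B C unfolding hyperbolic_def by blast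
  then obtain z where z: "z \<in> S" "dist x0 z \<le> gromov x0 x y + 2 * \<delta>" using tri[OF S B C] by blast
  obtain g where g: "path g" "path_image g \<subseteq> X" "pathstart g = x" "pathfinish g = y"
    "\<forall>p\<in>path_image g. \<exists>i. Suc i < length xs \<and> gromov x0 (xs ! i) (xs ! Suc i) \<le> dist x0 p"
    using chain_path[OF gs l(1,2), of x0] l by auto
  have "path_image g \<inter> cball z \<Delta> \<noteq> {}" using bn S z g unfolding bottleneck_def by blast
  then obtain q where q: "q \<in> path_image g" "dist z q \<le> \<Delta>" by auto
  obtain i where i: "Suc i < length xs" "gromov x0 (xs ! i) (xs ! Suc i) \<le> dist x0 q" using g(5) q by blast
  have "dist x0 q \<le> dist x0 z + dist z q" by (rule dist_triangle)
  thus ?thesis using cmin_le[OF i(1), of x0] i z q by linarith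
qed

lemma cg_key:
  assumes "geodesic_space X" "bottleneck X \<Delta>" "hyperbolic X \<delta>" "x0 \<in> X" "x \<in> X" "y \<in> X"
  shows "chain_gromov X x0 x y \<le> gromov x0 x y + \<Delta> + 2 * \<delta>"
  unfolding cg_eq using pair_chain[OF assms(5,6)] cmin_key[OF assms(1-4)]
  by (auto intro!: cSup_least)

lemma dprime_zero_iff:
  assumes "x \<in> X" "x' \<in> X" "dprime X x0 x x' = 0"
  shows "chain_gromov X x0 x x' = dist x0 x \<and> chain_gromov X x0 x x' = dist x0 x'"
  using cg_upper[OF assms(1,2), of x0] assms(3) unfolding dprime_def by linarith

lemma refl_end: "x \<in> X \<Longrightarrow> x \<in> end_map X x0 x"
  using cg_lower[of x X x x0] cg_upper[of x X x x0]
  by (auto simp: end_map_def end_rel_def dprime_def gromov_def)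

lemma dprime_cong:
  assumes X: "x \<in> X" "x' \<in> X" "y \<in> X" "y' \<in> X"
    and z: "dprime X x0 x x' = 0" "dprime X x0 y y' = 0"
  shows "dprime X x0 x' y' = dprime X x0 x y"
proof -
  note dx = dprime_zero_iff[OF X(1,2) z(1)] and dy = dprime_zero_iff[OF X(3,4) z(2)]
  have s1: "chain_gromov X x0 x' x = chain_gromov X x0 x x'" using cg_sym X by blast
  have s2: "chain_gromov X x0 y' y = chain_gromov X x0 y y'" using cg_sym X by blast
  have u1: "chain_gromov X x0 x y \<le> dist x0 x \<and> chain_gromov X x0 x y \<le> dist x0 y"
    using cg_upper X by blast
  have u2: "chain_gromov X x0 x' y' \<le> dist x0 x' \<and> chain_gromov X x0 x' y' \<le> dist x0 y'"
    using cg_upper X by blast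
  have t1: "min (chain_gromov X x0 x' x) (chain_gromov X x0 x y') \<le> chain_gromov X x0 x' y'"
    using cg_trans X by blast
  have t2: "min (chain_gromov X x0 x y) (chain_gromov X x0 y y') \<le> chain_gromov X x0 x y'"
    using cg_trans X by blast
  have t3: "min (chain_gromov X x0 x x') (chain_gromov X x0 x' y) \<le> chain_gromov X x0 x y"
    using cg_trans X by blast
  have t4: "min (chain_gromov X x0 x' y') (chain_gromov X x0 y' y) \<le> chain_gromov X x0 x' y"
    using cg_trans X by blast
  have "chain_gromov X x0 x y \<le> chain_gromov X x0 x' y'"
    using t1 t2 s1 dx dy u1 by (simp add: min_def split: if_splits)
  moreover have "chain_gromov X x0 x' y' \<le> chain_gromov X x0 x y"
    using t3 t4 s2 dx dy u2 by (simp add: min_def split: if_splits)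
  ultimately show ?thesis using dx dy unfolding dprime_def by simp
qed

theorem proposition4p2:
  fixes X :: "'a::metric_space set" and x0 :: 'a and \<Delta> \<delta> :: real
  assumes "geodesic_space X"
    and "quasi_tree X"
    and "bottleneck X \<Delta>"
    and "hyperbolic X \<delta>"
    and "x0 \<in> X"
  shows "end_map X x0 ` X = TX X x0 \<and>
         (\<forall>x\<in>X. \<forall>y\<in>X.
            dist x y - 2 * (\<Delta> + 2 * \<delta>) \<le> dstar X x0 (end_map X x0 x) (end_map X x0 y) \<and>
            dstar X x0 (end_map X x0 x) (end_map X x0 y) \<le> dist x y)"
proof (intro conjI ballI)
  show "end_map X x0 ` X = TX X x0"
    by (auto simp: TX_def quotient_def end_map_def)
next
  fix x y assume x: "x \<in> X" and y: "y \<in> X"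
  define x' where "x' = (SOME z. z \<in> end_map X x0 x)"
  define y' where "y' = (SOME z. z \<in> end_map X x0 y)"
  have "x' \<in> end_map X x0 x" unfolding x'_def using refl_end[OF x, of x0] by (rule someI)
  hence x': "x' \<in> X" "dprime X x0 x x' = 0" by (auto simp: end_map_def end_rel_def)
  have "y' \<in> end_map X x0 y" unfolding y'_def using refl_end[OF y, of x0] by (rule someI)
  hence y': "y' \<in> X" "dprime X x0 y y' = 0" by (auto simp: end_map_def end_rel_def)
  have ds: "dstar X x0 (end_map X x0 x) (end_map X x0 y) = dprime X x0 x y"
    unfolding dstar_def x'_def[symmetric] y'_def[symmetric]
    by (rule dprime_cong[OF x x'(1) y y'(1) x'(2) y'(2)])
  have "chain_gromov X x0 x y \<le> gromov x0 x y + \<Delta> + 2 * \<delta>"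
    by (rule cg_key[OF assms(1,3,4,5) x y])
  thus "dist x y - 2 * (\<Delta> + 2 * \<delta>) \<le> dstar X x0 (end_map X x0 x) (end_map X x0 y)"
    unfolding ds dprime_def gromov_def by (simp add: field_simps)
  have "gromov x0 x y \<le> chain_gromov X x0 x y" by (rule cg_lower[OF x y])
  thus "dstar X x0 (end_map X x0 x) (end_map X x0 y) \<le> dist x y"
    unfolding ds dprime_def gromov_def by simp
qed

end
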